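(* Let $t>0$ and let $\gamma\in\mathbb{R}^p$ be a deterministic target vector satisfying \[ \big\langle \widehat\Sigma_\lambda\big((I_p+t\widehat\Sigma_\lambda)^{-1}-\exp(-t\widehat\Sigma_\lambda)\big)\beta_\lambda,\ \gamma-\beta_\lambda\big\rangle\ge 0 . \] Then the prediction risk of gradient flow at time $t$ is bounded by that of ridge regression with penalty $\lambda+1/t$: \[ \mathbb{E}\big[\|\widehat\Sigma_\lambda^{1/2}(\hat\beta^{\mathrm{GF}}_{\lambda,t}-\gamma)\|^2\,\big|\,X\big]\le 1.2985^2\,\mathbb{E}\big[\|\widehat\Sigma_\lambda^{1/2}(\hat\beta_{\lambda+1/t}-\gamma)\|^2\,\big|\,X\big]. \] Moreover, the condition on $\gamma$ (and hence this risk bound) holds in particular for every $\gamma=\beta_{\lambda'}=\widehat\Sigma_{\lambda'}^{-1}\widehat\Sigma\beta_0$ with $\lambda'\in[0,\lambda]$.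
   Context: Linear model $y=X\beta_0+\varepsilon$ with i.i.d. observations $(x_i,y_i)$, $x_i\in\mathbb{R}^p$, $\mathbb{E}[\varepsilon_i|x_i]=0$, $\mathrm{Var}(\varepsilon_i|x_i)=\sigma^2$; $\beta_0=X^+X\beta_0$. Let $\widehat\Sigma=\frac1nX^\top X$, $\widehat\Sigma_\lambda=\widehat\Sigma+\lambda I_p$ for $\lambda\ge0$ (with $\widehat\Sigma_0^{-1}=\widehat\Sigma^+$), $y_\lambda=\frac1n\widehat\Sigma_\lambda^{-1/2}X^\top y$, $\beta_\lambda=\widehat\Sigma_\lambda^{-1}\widehat\Sigma\beta_0$. The ridge estimator with penalty $\lambda'>0$ is $\hat\beta_{\lambda'}=\widehat\Sigma_{\lambda'}^{-1}\frac1nX^\top y$, and the gradient flow estimator for the ridge criterion with penalty $\lambda$ is $\hat\beta^{\mathrm{GF}}_{\lambda,t}=\widehat\Sigma_\lambda^{-1/2}(I_p-\exp(-t\widehat\Sigma_\lambda))y_\lambda$, $t\ge0$. *)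

theory Defs
  imports "HOL-Analysis.Analysis" "HOL-Probability.Probability"
begin

definition diag_mat :: "('n::finite \<Rightarrow> real) \<Rightarrow> real^'n^'n" where
  "diag_mat d = (\<chi> i j. if i = j then d i else 0)"

text \<open>Spectral functional calculus for a real symmetric matrix A:
  if A = U diag(d) U^T with U orthogonal, then f(A) = U diag(f o d) U^T.
  (For symmetric A such a decomposition exists and f(A) does not depend on it.)\<close>
definition mat_fun :: "(real \<Rightarrow> real) \<Rightarrow> real^'n^'n \<Rightarrow> real^'n::finite^'n" where
  "mat_fun f A =
     (let (U, d) = (SOME (U, d). orthogonal_matrix U \<and> A = U ** diag_mat d ** transpose U)
      in U ** diag_mat (\<lambda>i. f (d i)) ** transpose U)"

definition mat_exp :: "real^'n^'n \<Rightarrow> real^'n::finite^'n" where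
  "mat_exp A = mat_fun exp A"

definition mat_sqrt :: "real^'n^'n \<Rightarrow> real^'n::finite^'n" where
  "mat_sqrt A = mat_fun sqrt A"

definition pinv :: "real^'n^'m \<Rightarrow> real^'m::finite^'n::finite" where
  "pinv A = (THE B. A ** B ** A = A \<and> B ** A ** B = B \<and>
                    transpose (A ** B) = A ** B \<and> transpose (B ** A) = B ** A)"

definition Sig :: "real^'p^'n \<Rightarrow> real^'p::finite^'p" where
  "Sig X = (1 / real CARD('n::finite)) *\<^sub>R (transpose X ** X)"

definition Sig_lam :: "real^'p^'n::finite \<Rightarrow> real \<Rightarrow> real^'p::finite^'p" where
  "Sig_lam X lam = Sig X + lam *\<^sub>R mat 1"

definition Sig_lam_inv :: "real^'p^'n::finite \<Rightarrow> real \<Rightarrow> real^'p::finite^'p" where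
  "Sig_lam_inv X lam = (if lam = 0 then pinv (Sig X) else matrix_inv (Sig_lam X lam))"

definition Sig_lam_inv_half :: "real^'p^'n::finite \<Rightarrow> real \<Rightarrow> real^'p::finite^'p" where
  "Sig_lam_inv_half X lam = mat_sqrt (Sig_lam_inv X lam)"

definition beta_lam :: "real^'p^'n::finite \<Rightarrow> real^'p \<Rightarrow> real \<Rightarrow> real^'p::finite" where
  "beta_lam X beta0 lam = (Sig_lam_inv X lam ** Sig X) *v beta0"

definition y_lam :: "real^'p^'n::finite \<Rightarrow> real \<Rightarrow> real^'n \<Rightarrow> real^'p::finite" where
  "y_lam X lam y = (1 / real CARD('n)) *\<^sub>R (Sig_lam_inv_half X lam *v (transpose X *v y))"

definition ridge :: "real^'p^'n::finite \<Rightarrow> real \<Rightarrow> real^'n \<Rightarrow> real^'p::finite" where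
  "ridge X lam' y = Sig_lam_inv X lam' *v ((1 / real CARD('n)) *\<^sub>R (transpose X *v y))"

text \<open>Gradient flow estimator for the ridge criterion with penalty lam, at time t.\<close>
definition gf :: "real^'p^'n::finite \<Rightarrow> real \<Rightarrow> real \<Rightarrow> real^'n \<Rightarrow> real^'p::finite" where
  "gf X lam t y = (Sig_lam_inv_half X lam **
      (mat 1 - mat_exp ((- t) *\<^sub>R Sig_lam X lam))) *v y_lam X lam y"

end

theory Submission
  imports Defs
begin


definition ud :: "real^'n^'n \<Rightarrow> ('n::finite \<Rightarrow> real) \<Rightarrow> real^'n^'n" where
  "ud U d = U ** diag_mat d ** transpose U"

lemma diag_mat_entry: "diag_mat d $ i $ j = (if i = j then d i else 0)"
  by (simp add: diag_mat_def)

lemma delta_left: "(\<Sum>k\<in>(UNIV::'n::finite set). (if i = k then a k else 0) * b k) = (a i * b i :: real)"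
proof -
  have "(\<lambda>k. (if i = k then a k else 0) * b k) = (\<lambda>k. if k = i then a i * b i else 0)" by auto
  thus ?thesis by (simp only:) simp
qed

lemma delta_right: "(\<Sum>k\<in>(UNIV::'n::finite set). b k * (if k = j then a k else 0)) = (b j * a j :: real)"
proof -
  have "(\<lambda>k. b k * (if k = j then a k else 0)) = (\<lambda>k. if k = j then b j * a j else 0)" by auto
  thus ?thesis by (simp only:) simp
qed

lemma diag_mul_diag: "diag_mat d ** diag_mat e = diag_mat (\<lambda>i. d i * e i)"
  by (auto simp add: vec_eq_iff matrix_matrix_mult_def diag_mat_def delta_left)

lemma diag_mat_vec: "diag_mat d *v x = (\<chi> i. d i * x $ i)"
  by (simp add: vec_eq_iff matrix_vector_mult_def diag_mat_def delta_left)

lemma ud_entry: "ud U d $ i $ j = (\<Sum>k\<in>UNIV. U$i$k * d k * U$j$k)"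
  unfolding ud_def
  by (simp add: matrix_matrix_mult_def diag_mat_def transpose_def if_distrib sum.distrib
      cong: if_cong)

lemma orth_TU: "orthogonal_matrix U \<Longrightarrow> transpose U ** U = mat 1"
  by (simp add: orthogonal_matrix_def)
lemma orth_UT: "orthogonal_matrix U \<Longrightarrow> U ** transpose U = mat 1"
  by (simp add: orthogonal_matrix_def)

lemma ud_transpose: "transpose (ud U d) = ud U d"
  by (simp add: vec_eq_iff ud_entry transpose_def mult.commute mult.left_commute)

lemma ud_add: "ud U d + ud U e = ud U (\<lambda>i. d i + e i)"
  by (simp add: vec_eq_iff ud_entry sum.distrib[symmetric] algebra_simps)

lemma ud_diff: "ud U d - ud U e = ud U (\<lambda>i. d i - e i)"
  by (simp add: vec_eq_iff ud_entry sum_subtractf[symmetric] algebra_simps)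

lemma ud_scale: "c *\<^sub>R ud U d = ud U (\<lambda>i. c * d i)"
  by (simp add: vec_eq_iff ud_entry sum_distrib_left algebra_simps)

lemma ud_const: assumes "orthogonal_matrix U" shows "ud U (\<lambda>i. c) = c *\<^sub>R mat 1"
proof -
  have "diag_mat (\<lambda>i. 1) = (mat 1 :: real^'a^'a)"
    by (simp add: vec_eq_iff diag_mat_def mat_def)
  hence "ud U (\<lambda>i. 1) = mat 1"
    unfolding ud_def using orth_UT[OF assms] by simp
  thus ?thesis using ud_scale[of c U "\<lambda>i. 1"] by simp
qed

lemma ud_one: "orthogonal_matrix U \<Longrightarrow> ud U (\<lambda>i. 1) = mat 1"
  using ud_const[of U 1] by simp

lemma ud_mul: assumes "orthogonal_matrix U" shows "ud U d ** ud U e = ud U (\<lambda>i. d i * e i)"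
proof -
  have "ud U d ** ud U e = U ** diag_mat d ** (transpose U ** U) ** diag_mat e ** transpose U"
    unfolding ud_def by (simp add: matrix_mul_assoc)
  also have "\<dots> = U ** (diag_mat d ** diag_mat e) ** transpose U"
    using orth_TU[OF assms] by (simp add: matrix_mul_assoc)
  finally show ?thesis by (simp add: diag_mul_diag ud_def)
qed

lemma ud_vec: assumes "orthogonal_matrix U"
  shows "transpose U *v (ud U d *v x) = diag_mat d *v (transpose U *v x)"
proof -
  have "transpose U *v (ud U d *v x) = (transpose U ** ud U d) *v x"
    by (simp only: matrix_vector_mul_assoc)
  also have "transpose U ** ud U d = (transpose U ** U) ** diag_mat d ** transpose U"
    unfolding ud_def by (simp add: matrix_mul_assoc)
  also have "\<dots> = diag_mat d ** transpose U" using orth_TU[OF assms] by simp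
  also have "(diag_mat d ** transpose U) *v x = diag_mat d *v (transpose U *v x)"
    by (simp only: matrix_vector_mul_assoc)
  finally show ?thesis .
qed

lemma orth_norm: fixes U :: "real^'n::finite^'n" assumes "orthogonal_matrix U" shows "norm (U *v x) = norm x"
proof -
  have "orthogonal_transformation ((*v) U)"
    using assms by (simp add: orthogonal_transformation_matrix)
  thus ?thesis by (simp add: orthogonal_transformation_norm)
qed

lemma norm_sq_vec: "(norm (x::real^'n::finite))^2 = (\<Sum>i\<in>UNIV. (x$i)^2)"
proof -
  have "(norm x)^2 = x \<bullet> x" by (simp add: dot_square_norm)
  also have "\<dots> = (\<Sum>i\<in>UNIV. (x$i)^2)" by (simp add: inner_vec_def power2_eq_square)
  finally show ?thesis .
qed

lemma norm_ud_vec: assumes "orthogonal_matrix U"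
  shows "(norm (ud U d *v x))^2 = (\<Sum>i\<in>UNIV. (d i * (transpose U *v x)$i)^2)"
proof -
  have "norm (ud U d *v x) = norm (transpose U *v (ud U d *v x))"
    using orth_norm[of "transpose U"] assms by (simp add: orthogonal_matrix_transpose)
  also have "\<dots> = norm (diag_mat d *v (transpose U *v x))" using ud_vec[OF assms] by simp
  finally show ?thesis by (simp add: norm_sq_vec diag_mat_vec)
qed

lemma mat_fun_ud: assumes U: "orthogonal_matrix U"
  shows "mat_fun f (ud U d) = ud U (\<lambda>i. f (d i))"
proof -
  define P where "P = (\<lambda>(V::real^'a^'a, e::'a\<Rightarrow>real). orthogonal_matrix V \<and> ud U d = V ** diag_mat e ** transpose V)"
  have mf0: "mat_fun f (ud U d) = (case (SOME p. P p) of (V, e) \<Rightarrow> V ** diag_mat (\<lambda>i. f (e i)) ** transpose V)"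
    by (simp add: mat_fun_def P_def Let_def)
  have ex: "P (U, d)" using U by (simp add: P_def ud_def)
  obtain V e where Ve: "(SOME p. P p) = (V, e)" by (cases "SOME p. P p") auto
  have "P (V, e)" using someI[of P, OF ex] Ve by simp
  hence V: "orthogonal_matrix V" and eq: "ud U d = ud V e" by (auto simp: P_def ud_def)
  have mf: "mat_fun f (ud U d) = ud V (\<lambda>i. f (e i))"
    using mf0 Ve by (simp add: ud_def)
  define W where "W = transpose V ** U"
  have WD: "W ** diag_mat d = diag_mat e ** W"
  proof -
    have "transpose V ** (ud U d) ** U = transpose V ** U ** diag_mat d ** (transpose U ** U)"
      unfolding ud_def by (simp add: matrix_mul_assoc)
    hence "W ** diag_mat d = transpose V ** (ud U d) ** U"
      unfolding W_def using orth_TU[OF U] by simp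
    also have "\<dots> = transpose V ** ud V e ** U" using eq by simp
    also have "transpose V ** ud V e ** U = (transpose V ** V) ** diag_mat e ** (transpose V ** U)"
      unfolding ud_def by (simp add: matrix_mul_assoc)
    also have "\<dots> = diag_mat e ** W"
      unfolding W_def using orth_TU[OF V] by simp
    finally show ?thesis .
  qed
  have ent: "W$i$j * d j = e i * W$i$j" for i j
  proof -
    have "(W ** diag_mat d)$i$j = (diag_mat e ** W)$i$j" using WD by simp
    thus ?thesis by (simp add: matrix_matrix_mult_def diag_mat_def delta_left delta_right)
  qed
  have WF: "W ** diag_mat (\<lambda>i. f (d i)) = diag_mat (\<lambda>i. f (e i)) ** W"
  proof -
    have "W$i$j * f (d j) = f (e i) * W$i$j" for i j
    proof (cases "W$i$j = 0")
      case True thus ?thesis by simp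
    next
      case False
      with ent[of i j] have "d j = e i" by (simp add: mult.commute)
      thus ?thesis by simp
    qed
    thus ?thesis by (simp add: vec_eq_iff matrix_matrix_mult_def diag_mat_def delta_left delta_right)
  qed
  have "ud U (\<lambda>i. f (d i)) = (V ** transpose V) ** U ** diag_mat (\<lambda>i. f (d i)) ** transpose U"
    using orth_UT[OF V] by (simp add: ud_def)
  also have "\<dots> = V ** (W ** diag_mat (\<lambda>i. f (d i))) ** transpose U"
    unfolding W_def by (simp add: matrix_mul_assoc)
  also have "\<dots> = V ** diag_mat (\<lambda>i. f (e i)) ** (W ** transpose U)"
    using WF by (simp add: matrix_mul_assoc)
  also have "W ** transpose U = transpose V"
    unfolding W_def using orth_UT[OF U] by (simp add: matrix_mul_assoc[symmetric])
  finally show ?thesis using mf by (simp add: ud_def)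
qed



lemma sym_inner: fixes A :: "real^'n::finite^'n"
  assumes "transpose A = A" shows "x \<bullet> (A *v y) = y \<bullet> (A *v x)"
proof -
  have "x \<bullet> (A *v y) = (x v* A) \<bullet> y" by (simp add: dot_lmul_matrix)
  also have "x v* A = transpose A *v x" by (simp add: transpose_matrix_vector)
  finally show ?thesis using assms by (simp add: inner_commute)
qed

lemma quad_zero: fixes p q :: real
  assumes c: "q \<ge> 0" and h: "\<And>s. 0 \<le> 2 * s * p + s^2 * q" shows "p = 0"
proof -
  define s where "s = - p / (q+1)"
  have cp: "q + 1 > 0" using c by simp
  have "0 \<le> (2 * s * p + s^2 * q) * (q+1)^2" using h[of s] cp by simp
  also have "(2 * s * p + s^2 * q) * (q+1)^2 = - (p^2 * (q + 2))"
  proof -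
    have sq: "s * (q+1) = -p" unfolding s_def using cp by simp
    have "2 * s * p * (q+1)^2 = 2*p*(q+1)*(s*(q+1))" by (simp add: power2_eq_square algebra_simps)
    hence a1: "2 * s * p * (q+1)^2 = -2 * p^2 * (q+1)" using sq by (simp add: power2_eq_square)
    have "s^2 * q * (q+1)^2 = q * (s*(q+1))^2" by (simp add: power2_eq_square algebra_simps)
    hence a2: "s^2 * q * (q+1)^2 = p^2 * q" using sq by simp
    have "(2 * s * p + s^2 * q) * (q+1)^2 = 2 * s * p * (q+1)^2 + s^2 * q * (q+1)^2"
      by (simp add: distrib_right)
    also have "\<dots> = -2 * p^2 * (q+1) + p^2 * q" by (simp only: a1 a2)
    also have "\<dots> = - (p^2 * (q + 2))" by (simp add: algebra_simps)
    finally show ?thesis .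
  qed
  finally have "p^2 * (q+2) \<le> 0" by simp
  moreover have "p^2 * (q+2) \<ge> 0" using c by simp
  ultimately have "p^2 * (q+2) = 0" by linarith
  thus ?thesis using c by simp
qed

lemma quad_expand: fixes A :: "real^'n::finite^'n"
  shows "(v + s *\<^sub>R w) \<bullet> (A *v (v + s *\<^sub>R w)) =
     v \<bullet> (A *v v) + s * (v \<bullet> (A *v w)) + s * (w \<bullet> (A *v v)) + s^2 * (w \<bullet> (A *v w))"
  by (simp add: matrix_vector_right_distrib matrix_vector_mult_scaleR inner_add_left inner_add_right
      algebra_simps power2_eq_square)

lemma eig_exists: fixes A :: "real^'n::finite^'n"
  assumes sym: "transpose A = A" and S: "subspace S" and ne: "S \<noteq> {0}"
    and inv: "\<forall>x\<in>S. A *v x \<in> S"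
  shows "\<exists>v \<mu>. v \<in> S \<and> norm v = 1 \<and> A *v v = \<mu> *\<^sub>R v"
proof -
  define K where "K = S \<inter> sphere 0 1"
  have cK: "compact K" unfolding K_def
    by (rule closed_Int_compact) (simp_all add: closed_subspace S)
  obtain x where x: "x \<in> S" "x \<noteq> 0" using ne subspace_0[OF S] by blast
  have "(1/norm x) *\<^sub>R x \<in> K" using x S by (simp add: K_def subspace_scale)
  hence neK: "K \<noteq> {}" by blast
  have cont: "continuous_on K (\<lambda>x. x \<bullet> (A *v x))"
    by (intro continuous_intros matrix_vector_mult_linear_continuous_on[THEN continuous_on_compose2]) auto
  obtain v where vK: "v \<in> K" and vmax: "\<forall>y\<in>K. y \<bullet> (A *v y) \<le> v \<bullet> (A *v v)"
    using continuous_attains_sup[OF cK neK cont] by blast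
  define \<mu> where "\<mu> = v \<bullet> (A *v v)"
  have vS: "v \<in> S" and nv: "norm v = 1" using vK by (auto simp: K_def)
  have vv: "v \<bullet> v = 1" using nv by (simp add: dot_square_norm)
  have bound: "y \<bullet> (A *v y) \<le> \<mu> * (y \<bullet> y)" if yS: "y \<in> S" for y
  proof (cases "y = 0")
    case True thus ?thesis by simp
  next
    case False
    define z where "z = (1/norm y) *\<^sub>R y"
    have "z \<in> K" using False yS S by (simp add: K_def z_def subspace_scale)
    hence "z \<bullet> (A *v z) \<le> \<mu>" using vmax by (simp add: \<mu>_def)
    moreover have "z \<bullet> (A *v z) = (y \<bullet> (A *v y)) / (norm y)^2"
      by (simp add: z_def matrix_vector_mult_scaleR power2_eq_square)
    moreover have "(norm y)^2 > 0" using False by simp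
    ultimately have "y \<bullet> (A *v y) \<le> \<mu> * (norm y)^2" by (simp add: divide_le_eq)
    thus ?thesis by (simp add: dot_square_norm)
  qed
  define F where "F y = \<mu> * (y \<bullet> y) - y \<bullet> (A *v y)" for y
  have Fnn: "F y \<ge> 0" if "y \<in> S" for y using bound[OF that] by (simp add: F_def)
  define w where "w = \<mu> *\<^sub>R v - A *v v"
  have wS: "w \<in> S" unfolding w_def using vS inv S by (simp add: subspace_diff subspace_scale)
  have key: "0 \<le> 2 * s * (w \<bullet> w) + s^2 * F w" for s
  proof -
    have "v + s *\<^sub>R w \<in> S" using vS wS S by (simp add: subspace_add subspace_scale)
    hence "0 \<le> F (v + s *\<^sub>R w)" by (rule Fnn)
    also have "F (v + s *\<^sub>R w) = 2 * s * (w \<bullet> w) + s^2 * F w"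
    proof -
      have e1: "(v + s *\<^sub>R w) \<bullet> (v + s *\<^sub>R w) = v \<bullet> v + 2 * s * (v \<bullet> w) + s^2 * (w \<bullet> w)"
        by (simp add: inner_add_left inner_add_right inner_commute algebra_simps power2_eq_square)
      have e2: "v \<bullet> (A *v w) = w \<bullet> (A *v v)" using sym_inner[OF sym] .
      have e3: "w \<bullet> w = \<mu> * (v \<bullet> w) - w \<bullet> (A *v v)"
        unfolding w_def by (simp add: inner_diff_right inner_diff_left inner_commute algebra_simps)
      show ?thesis unfolding F_def quad_expand e1 e2 e3 vv \<mu>_def[symmetric]
        by (simp add: algebra_simps)
    qed
    finally show ?thesis .
  qed
  have "w \<bullet> w = 0" by (rule quad_zero[OF Fnn[OF wS] key])
  hence "w = 0" by simp
  hence "A *v v = \<mu> *\<^sub>R v" by (simp add: w_def)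
  thus ?thesis using vS nv by blast
qed

lemma spec_sub: fixes A :: "real^'n::finite^'n"
  assumes sym: "transpose A = A"
  shows "subspace S \<Longrightarrow> (\<forall>x\<in>S. A *v x \<in> S) \<Longrightarrow>
    \<exists>B. B \<subseteq> S \<and> S \<subseteq> span B \<and> pairwise orthogonal B \<and>
        (\<forall>x\<in>B. norm x = 1 \<and> (\<exists>\<mu>. A *v x = \<mu> *\<^sub>R x))"
proof (induction "dim S" arbitrary: S rule: less_induct)
  case less
  show ?case
  proof (cases "S = {0}")
    case True
    thus ?thesis by (intro exI[of _ "{}"]) auto
  next
    case False
    obtain v \<mu> where vS: "v \<in> S" and nv: "norm v = 1" and ev: "A *v v = \<mu> *\<^sub>R v"
      using eig_exists[OF sym less.prems(1) False less.prems(2)] by blast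
    have vv: "v \<bullet> v = 1" using nv by (simp add: dot_square_norm)
    define S' where "S' = {x \<in> S. v \<bullet> x = 0}"
    have sub': "subspace S'" using less.prems(1)
      unfolding S'_def subspace_def by (auto simp: inner_add_right)
    have inv': "\<forall>x\<in>S'. A *v x \<in> S'"
    proof
      fix x assume "x \<in> S'"
      hence xS: "x \<in> S" and xv: "v \<bullet> x = 0" by (auto simp: S'_def)
      have "v \<bullet> (A *v x) = x \<bullet> (A *v v)" by (rule sym_inner[OF sym])
      also have "\<dots> = 0" using xv by (simp add: ev inner_commute)
      finally show "A *v x \<in> S'" using less.prems(2) xS by (simp add: S'_def)
    qed
    have "v \<notin> S'" using vv by (simp add: S'_def)
    hence "S' \<noteq> S" using vS by blast
    hence "S' \<subset> S" by (auto simp: S'_def)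
    hence "span S' \<subset> span S" using sub' less.prems(1) by (simp add: span_eq_iff[THEN iffD2])
    hence "dim S' < dim S" by (rule dim_psubset)
    from less.hyps[OF this sub' inv'] obtain B' where
      B'S: "B' \<subseteq> S'" and spB': "S' \<subseteq> span B'" and poB': "pairwise orthogonal B'"
      and nB': "\<forall>x\<in>B'. norm x = 1 \<and> (\<exists>\<mu>. A *v x = \<mu> *\<^sub>R x)" by blast
    show ?thesis
    proof (intro exI[of _ "insert v B'"] conjI)
      show "insert v B' \<subseteq> S" using vS B'S by (auto simp: S'_def)
      show "S \<subseteq> span (insert v B')"
      proof
        fix x assume xS: "x \<in> S"
        define x' where "x' = x - (v \<bullet> x) *\<^sub>R v"
        have "x' \<in> S'" using xS vS vv less.prems(1)
          by (simp add: S'_def x'_def subspace_diff subspace_scale inner_diff_right)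
        hence "x' \<in> span (insert v B')" using spB' span_mono[of B' "insert v B'"] by blast
        moreover have "v \<in> span (insert v B')" by (simp add: span_base)
        ultimately have "x' + (v \<bullet> x) *\<^sub>R v \<in> span (insert v B')"
          by (simp add: span_add span_scale)
        thus "x \<in> span (insert v B')" by (simp add: x'_def)
      qed
      show "pairwise orthogonal (insert v B')"
        using poB' B'S by (auto simp: pairwise_insert S'_def orthogonal_def inner_commute)
      show "\<forall>x\<in>insert v B'. norm x = 1 \<and> (\<exists>\<mu>. A *v x = \<mu> *\<^sub>R x)"
        using nB' nv ev by auto
    qed
  qed
qed

lemma spectral: fixes A :: "real^'n::finite^'n"
  assumes sym: "transpose A = A"
  shows "\<exists>U d. orthogonal_matrix U \<and> A = ud U d"
proof -
  obtain B where spB: "UNIV \<subseteq> span B" and po: "pairwise orthogonal B"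
    and nB: "\<forall>x\<in>B. norm x = 1 \<and> (\<exists>\<mu>. A *v x = \<mu> *\<^sub>R x)"
    using spec_sub[OF sym, of UNIV] by auto
  have "0 \<notin> B" using nB by force
  hence ind: "independent B" using po pairwise_orthogonal_independent by blast
  hence fin: "finite B" by (rule finiteI_independent)
  have "card B = dim (UNIV :: (real^'n) set)"
    using basis_card_eq_dim[of B UNIV] spB ind by auto
  hence cB: "card B = card (UNIV :: 'n set)" by simp
  obtain g where g: "bij_betw g (UNIV :: 'n set) B"
    using finite_same_card_bij[of "UNIV :: 'n set" B] fin cB by auto
  define U :: "real^'n^'n" where "U = (\<chi> i j. g j $ i)"
  have col: "column j U = g j" for j by (simp add: U_def column_def vec_eq_iff)
  have gB: "g j \<in> B" for j using g by (auto simp: bij_betw_def)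
  have ginj: "g i \<noteq> g j" if "i \<noteq> j" for i j using g that by (auto simp: bij_betw_def inj_on_def)
  have U: "orthogonal_matrix U"
    unfolding orthogonal_matrix_orthonormal_columns col
    using nB gB ginj po by (auto simp: pairwise_def)
  define d where "d j = (SOME \<mu>. A *v g j = \<mu> *\<^sub>R g j)" for j
  have ev: "A *v g j = d j *\<^sub>R g j" for j
    unfolding d_def using nB gB[of j] by (auto intro: someI_ex)
  have AU: "A ** U = U ** diag_mat d"
  proof -
    have "(A ** U) $ i $ j = (U ** diag_mat d) $ i $ j" for i j
    proof -
      have "(A ** U) $ i $ j = (A *v g j) $ i"
        by (simp add: matrix_matrix_mult_def matrix_vector_mult_def U_def)
      also have "\<dots> = d j * g j $ i" by (simp add: ev)
      also have "\<dots> = (U ** diag_mat d) $ i $ j"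
        by (simp add: matrix_matrix_mult_def diag_mat_def U_def delta_right mult.commute)
      finally show ?thesis .
    qed
    thus ?thesis by (simp add: vec_eq_iff)
  qed
  have "A = A ** (U ** transpose U)" using orth_UT[OF U] by simp
  also have "\<dots> = U ** diag_mat d ** transpose U" using AU by (simp add: matrix_mul_assoc)
  finally show ?thesis using U by (auto simp: ud_def)
qed



lemma exp_num_bound: "exp (17921/10000 :: real) \<le> 60025/10000"
proof -
  define x :: real where "x = - 17921/10000"
  obtain t where "exp x = (\<Sum>m<12. x ^ m / fact m) + exp t / fact 12 * x ^ 12"
    using Maclaurin_exp_le[of x 12] by blast
  moreover have "exp t / fact 12 * x ^ 12 \<ge> 0" by (simp add: x_def)
  ultimately have lb: "exp x \<ge> (\<Sum>m<12. x ^ m / fact m)" by linarith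
  have "(\<Sum>m<12. x ^ m / fact m) \<ge> 10000/60025"
    by (simp add: x_def eval_nat_numeral fact_numeral)
  hence "exp x \<ge> 10000/60025" using lb by linarith
  hence "exp (-x) \<le> 60025/10000"
    by (simp add: exp_minus field_simps)
  thus ?thesis by (simp add: x_def)
qed



lemma gderiv: "0 < 1 + v \<Longrightarrow> 0 < 1 - a * v \<Longrightarrow> ((\<lambda>v. ln (1 + v) - ln (1 - a * v) - v) has_real_derivative (1/(1+v) - (- a)/(1 - a * v) - 1)) (at (v::real))"
  apply (rule derivative_eq_intros refl | simp)+
  done

lemma g_ineq:
  fixes u :: real
  assumes u0: "0 \<le> u" and ua: "(2985/10000) * u < 1"
  shows "ln (1 - (2985/10000) * u) \<le> ln (1 + u) - u"
proof -
  define a :: real where "a = 2985/10000"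
  define D :: real where "D = (1-a)^2 - 4*a^2"
  define sD where "sD = sqrt D"
  have Dpos: "D > 0" by (simp add: D_def a_def power2_eq_square)
  have sD2: "sD^2 = D" using Dpos by (simp add: sD_def)
  have sD0: "sD > 0" using Dpos by (simp add: sD_def)
  define r1 where "r1 = ((1-a) - sD)/(2*a)"
  define r2 where "r2 = ((1-a) + sD)/(2*a)"
  have a0: "a > 0" by (simp add: a_def)
  have r12: "r1 < r2" using sD0 a0 by (simp add: r1_def r2_def divide_strict_right_mono)
  have sumr: "r1 + r2 = (1-a)/a" using a0 by (simp add: r1_def r2_def field_simps)
  have prodr: "r1 * r2 = 1"
  proof -
    have "r1 * r2 = ((1-a)^2 - sD^2) / (4*a^2)" using a0
      by (simp add: r1_def r2_def field_simps power2_eq_square)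
    also have "\<dots> = 1" using a0 sD2 by (simp add: D_def)
    finally show ?thesis .
  qed
  define Q where "Q v = a * v^2 - (1-a) * v + a" for v
  have Qfac: "Q v = a * ((v - r1) * (v - r2))" for v
  proof -
    have "a * ((v - r1) * (v - r2)) = a * v^2 - a * (r1 + r2) * v + a * (r1 * r2)"
      by (simp add: algebra_simps power2_eq_square)
    also have "\<dots> = Q v" using a0 by (simp add: sumr prodr Q_def)
    finally show ?thesis by simp
  qed
  define g where "g v = ln (1 + v) - ln (1 - a * v) - v" for v
  have gd: "(g has_real_derivative (Q v / ((1+v) * (1 - a * v)))) (at v)"
    if "0 \<le> v" "a * v < 1" for v
  proof -
    have p1: "1 + v > 0" using that by simp
    have p2: "1 - a * v > 0" using that by simp
    have "(g has_real_derivative (1/(1+v) - (- a)/(1 - a * v) - 1)) (at v)"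
      unfolding g_def using gderiv[OF p1 p2] by simp
    moreover have "1/(1+v) - (- a)/(1 - a * v) - 1 = Q v / ((1+v) * (1 - a * v))"
    proof -
      have ne: "(1+v) * (1 - a * v) \<noteq> 0" using p1 p2 by simp
      have a1: "1/(1+v) * ((1+v) * (1 - a * v)) = 1 - a * v" using p1 by simp
      have a2: "(- a)/(1 - a * v) * ((1+v) * (1 - a * v)) = - a * (1+v)" using p2 by simp
      have "(1/(1+v) - (- a)/(1 - a * v) - 1) * ((1+v) * (1 - a * v)) = 
         1/(1+v) * ((1+v) * (1 - a * v)) - (- a)/(1 - a * v) * ((1+v) * (1 - a * v)) - ((1+v) * (1 - a * v))"
        by (simp add: algebra_simps)
      also have "\<dots> = Q v" unfolding a1 a2 by (simp add: Q_def algebra_simps power2_eq_square)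
      finally show ?thesis using ne by (simp add: eq_divide_eq)
    qed
    ultimately show ?thesis by simp
  qed
  have g0: "g 0 = 0" by (simp add: g_def)
  have r2lo: "r2 \<ge> 1792/1000"
  proof -
    have "(1792/1000 * (2*a) - (1-a))^2 \<le> D" by (simp add: a_def D_def power2_eq_square)
    hence "1792/1000 * (2*a) - (1-a) \<le> sD" unfolding sD_def by (rule real_le_rsqrt)
    thus ?thesis using a0 by (simp add: r2_def field_simps)
  qed
  have r2hi: "r2 \<le> 17921/10000"
  proof -
    have "D \<le> (17921/10000 * (2*a) - (1-a))^2" by (simp add: a_def D_def power2_eq_square)
    hence "sD \<le> sqrt ((17921/10000 * (2*a) - (1-a))^2)" unfolding sD_def by (rule real_sqrt_le_mono)
    also have "\<dots> = 17921/10000 * (2*a) - (1-a)" by (simp add: a_def)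
    finally show ?thesis using a0 by (simp add: r2_def field_simps)
  qed
  have ar2: "a * r2 < 1" using r2hi by (simp add: a_def)
  have gr2: "g r2 \<ge> 0"
  proof -
    have "exp r2 \<le> exp (17921/10000)" using r2hi by simp
    also have "\<dots> \<le> 60025/10000" by (rule exp_num_bound)
    also have "60025/10000 \<le> (1 + 1792/1000) / (1 - a * (1792/1000))" by (simp add: a_def)
    also have "(1 + 1792/1000) / (1 - a * (1792/1000)) \<le> (1 + r2) / (1 - a * r2)"
      using r2lo ar2 a0 by (simp add: a_def frac_le divide_simps) 
    finally have e: "exp r2 \<le> (1 + r2) / (1 - a * r2)" .
    have p1: "1 + r2 > 0" using r2lo by simp
    have p2: "1 - a * r2 > 0" using ar2 by simp
    have "r2 = ln (exp r2)" by simp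
    also have "\<dots> \<le> ln ((1 + r2) / (1 - a * r2))"
    proof -
      have "(1 + r2) / (1 - a * r2) > 0" using p1 p2 by simp
      thus ?thesis using e by (subst ln_le_cancel_iff) auto
    qed
    also have "\<dots> = ln (1 + r2) - ln (1 - a * r2)" using p1 p2 by (simp add: ln_div)
    finally show ?thesis by (simp add: g_def)
  qed
  have den: "(1+v) * (1 - a * v) > 0" if "0 \<le> v" "a * v < 1" for v using that by simp
  have gu: "g u \<ge> 0"
  proof (cases "u \<le> r1")
    case True
    have "g 0 \<le> g u"
    proof (rule DERIV_nonneg_imp_nondecreasing[OF u0])
      fix x assume x: "0 \<le> x" "x \<le> u"
      have ax: "a * x < 1" using x ua a0 unfolding a_def by (simp add: mult_left_mono order.strict_trans1)
      have "(x - r1) * (x - r2) \<ge> 0" using x True r12 by (intro mult_nonpos_nonpos) auto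
      hence "Q x \<ge> 0" unfolding Qfac using a0 by simp
      thus "\<exists>y. (g has_real_derivative y) (at x) \<and> 0 \<le> y"
        using gd[OF x(1) ax] den[OF x(1) ax] by (intro exI[of _ "Q x / ((1+x) * (1 - a * x))"]) simp
    qed
    thus ?thesis using g0 by simp
  next
    case False
    show ?thesis
    proof (cases "u \<le> r2")
      case True
      have "g r2 \<le> g u"
      proof (rule DERIV_nonpos_imp_nonincreasing[OF True])
        fix x assume x: "u \<le> x" "x \<le> r2"
        have x0: "0 \<le> x" using x u0 by simp
        have ax: "a * x < 1" using x ar2 a0 by (smt (verit) mult_left_mono)
        have "(x - r1) * (x - r2) \<le> 0" using x False by (intro mult_nonneg_nonpos) auto
        hence "Q x \<le> 0" unfolding Qfac using a0 by (simp add: mult_nonneg_nonpos)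
        thus "\<exists>y. (g has_real_derivative y) (at x) \<and> y \<le> 0"
          using gd[OF x0 ax] den[OF x0 ax] by (intro exI[of _ "Q x / ((1+x) * (1 - a * x))"])
            (simp add: divide_nonpos_pos)
      qed
      thus ?thesis using gr2 by simp
    next
      case False
      have "g r2 \<le> g u"
      proof (rule DERIV_nonneg_imp_nondecreasing[of r2 u])
        show "r2 \<le> u" using False by simp
        fix x assume x: "r2 \<le> x" "x \<le> u"
        have x0: "0 \<le> x" using x r2lo by simp
        have ax: "a * x < 1" using x ua a0 unfolding a_def by (smt (verit) mult_left_mono)
        have "(x - r1) * (x - r2) \<ge> 0" using x r12 by (intro mult_nonneg_nonneg) auto
        hence "Q x \<ge> 0" unfolding Qfac using a0 by simp
        thus "\<exists>y. (g has_real_derivative y) (at x) \<and> 0 \<le> y"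
          using gd[OF x0 ax] den[OF x0 ax] by (intro exI[of _ "Q x / ((1+x) * (1 - a * x))"]) simp
      qed
      thus ?thesis using gr2 by simp
    qed
  qed
  thus ?thesis by (simp add: g_def a_def)
qed

lemma scalar_main:
  fixes u :: real assumes u: "u > 0"
  shows "(1 - exp (-u)) * (1 + u) \<le> 12985/10000 * u"
proof (cases "(2985/10000) * u < 1")
  case True
  have "ln (1 - (2985/10000) * u) \<le> ln (1 + u) - u" by (rule g_ineq) (use u True in auto)
  hence "exp (ln (1 - (2985/10000) * u)) \<le> exp (ln (1 + u) - u)" by simp
  hence "1 - (2985/10000) * u \<le> (1 + u) * exp (-u)"
    using True u by (simp add: exp_diff exp_minus field_simps)
  thus ?thesis by (simp add: algebra_simps)
next
  case False
  have nn: "exp (-u) * (1 + u) \<ge> 0" using u by simp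
  have e: "(1 - exp (-u)) * (1 + u) = (1+u) - exp (-u) * (1 + u)" by (simp add: algebra_simps)
  show ?thesis using e False nn by linarith
qed



lemma exp_quad:
  fixes M :: "'a measure" and eps :: "'a \<Rightarrow> real^'n::finite"
    and a :: "real^'m::finite" and L :: "real^'n^'m" and sigma :: real
  assumes P: "prob_space M"
    and eps_int: "\<And>i. integrable M (\<lambda>\<omega>. eps \<omega> $ i)"
    and eps_int2: "\<And>i j. integrable M (\<lambda>\<omega>. eps \<omega> $ i * eps \<omega> $ j)"
    and eps_mean: "\<And>i. prob_space.expectation M (\<lambda>\<omega>. eps \<omega> $ i) = 0"
    and eps_cov: "\<And>i j. prob_space.expectation M (\<lambda>\<omega>. eps \<omega> $ i * eps \<omega> $ j)
                     = (if i = j then sigma\<^sup>2 else 0)"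
  shows "prob_space.expectation M (\<lambda>\<omega>. (norm (a + L *v eps \<omega>))\<^sup>2)
         = (norm a)\<^sup>2 + sigma\<^sup>2 * (\<Sum>i\<in>UNIV. \<Sum>j\<in>UNIV. (L$i$j)\<^sup>2)"
proof -
  interpret prob_space M by (rule P)
  have pt: "(norm (a + L *v e))\<^sup>2 = (\<Sum>i\<in>UNIV. (a$i)\<^sup>2)
      + (\<Sum>i\<in>UNIV. \<Sum>j\<in>UNIV. (2 * a$i * L$i$j) * e$j)
      + (\<Sum>i\<in>UNIV. \<Sum>j\<in>UNIV. \<Sum>k\<in>UNIV. (L$i$j * L$i$k) * (e$j * e$k))" for e
  proof -
    have c: "(a + L *v e)$i = a$i + (\<Sum>j\<in>UNIV. L$i$j * e$j)" for i
      by (simp add: matrix_vector_mult_def)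
    have sq: "(a$i + (\<Sum>j\<in>UNIV. L$i$j * e$j))\<^sup>2 = (a$i)\<^sup>2 + (\<Sum>j\<in>UNIV. (2 * a$i * L$i$j) * e$j)
        + (\<Sum>j\<in>UNIV. \<Sum>k\<in>UNIV. (L$i$j * L$i$k) * (e$j * e$k))" for i
    proof -
      have "(\<Sum>j\<in>UNIV. L$i$j * e$j) * (\<Sum>k\<in>UNIV. L$i$k * e$k)
          = (\<Sum>j\<in>UNIV. \<Sum>k\<in>UNIV. (L$i$j * L$i$k) * (e$j * e$k))"
        by (simp add: sum_product algebra_simps)
      moreover have "2 * a$i * (\<Sum>j\<in>UNIV. L$i$j * e$j) = (\<Sum>j\<in>UNIV. (2 * a$i * L$i$j) * e$j)"
        by (simp add: sum_distrib_left algebra_simps)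
      ultimately show ?thesis by (simp add: power2_eq_square algebra_simps)
    qed
    show ?thesis unfolding norm_sq_vec c sq by (simp add: sum.distrib)
  qed
  have i1: "integrable M (\<lambda>\<omega>. \<Sum>i\<in>UNIV. \<Sum>j\<in>UNIV. (2 * a$i * L$i$j) * eps \<omega> $ j)"
    by (intro Bochner_Integration.integrable_sum Bochner_Integration.integrable_mult_right eps_int)
  have i2: "integrable M (\<lambda>\<omega>. \<Sum>i\<in>UNIV. \<Sum>j\<in>UNIV. \<Sum>k\<in>UNIV. (L$i$j * L$i$k) * (eps \<omega> $ j * eps \<omega> $ k))"
    by (intro Bochner_Integration.integrable_sum Bochner_Integration.integrable_mult_right eps_int2)
  have e1: "expectation (\<lambda>\<omega>. \<Sum>i\<in>UNIV. \<Sum>j\<in>UNIV. (2 * a$i * L$i$j) * eps \<omega> $ j) = 0"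
    by (simp add: Bochner_Integration.integral_sum Bochner_Integration.integrable_sum Bochner_Integration.integrable_mult_right eps_int eps_mean)
  have e2: "expectation (\<lambda>\<omega>. \<Sum>i\<in>UNIV. \<Sum>j\<in>UNIV. \<Sum>k\<in>UNIV. (L$i$j * L$i$k) * (eps \<omega> $ j * eps \<omega> $ k))
      = sigma\<^sup>2 * (\<Sum>i\<in>UNIV. \<Sum>j\<in>UNIV. (L$i$j)\<^sup>2)"
  proof -
    have "expectation (\<lambda>\<omega>. \<Sum>i\<in>UNIV. \<Sum>j\<in>UNIV. \<Sum>k\<in>UNIV. (L$i$j * L$i$k) * (eps \<omega> $ j * eps \<omega> $ k))
      = (\<Sum>i\<in>UNIV. \<Sum>j\<in>UNIV. \<Sum>k\<in>UNIV. (L$i$j * L$i$k) * (if j = k then sigma\<^sup>2 else 0))"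
      by (simp add: Bochner_Integration.integral_sum Bochner_Integration.integrable_sum Bochner_Integration.integrable_mult_right eps_int2 eps_cov del: mult_if_delta)
    also have "\<dots> = (\<Sum>i\<in>UNIV. \<Sum>j\<in>UNIV. (L$i$j)\<^sup>2 * sigma\<^sup>2)"
    proof -
      have "(\<Sum>k\<in>UNIV. (L$i$j * L$i$k) * (if j = k then sigma\<^sup>2 else 0)) = (L$i$j)\<^sup>2 * sigma\<^sup>2" for i j
      proof -
        have "(\<lambda>k. (L$i$j * L$i$k) * (if j = k then sigma\<^sup>2 else 0)) = (\<lambda>k. if k = j then (L$i$j)\<^sup>2 * sigma\<^sup>2 else 0)"
          by (auto simp: power2_eq_square)
        thus ?thesis by (simp only:) simp
      qed
      thus ?thesis by simp
    qed
    also have "\<dots> = sigma\<^sup>2 * (\<Sum>i\<in>UNIV. \<Sum>j\<in>UNIV. (L$i$j)\<^sup>2)"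
      by (simp add: sum_distrib_left mult.commute)
    finally show ?thesis .
  qed
  have "expectation (\<lambda>\<omega>. (norm (a + L *v eps \<omega>))\<^sup>2) =
     expectation (\<lambda>\<omega>. (\<Sum>i\<in>UNIV. (a$i)\<^sup>2)
      + (\<Sum>i\<in>UNIV. \<Sum>j\<in>UNIV. (2 * a$i * L$i$j) * eps \<omega> $ j)
      + (\<Sum>i\<in>UNIV. \<Sum>j\<in>UNIV. \<Sum>k\<in>UNIV. (L$i$j * L$i$k) * (eps \<omega> $ j * eps \<omega> $ k)))"
    by (simp only: pt)
  also have "\<dots> = (\<Sum>i\<in>UNIV. (a$i)\<^sup>2) + expectation (\<lambda>\<omega>. \<Sum>i\<in>UNIV. \<Sum>j\<in>UNIV. (2 * a$i * L$i$j) * eps \<omega> $ j)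
      + expectation (\<lambda>\<omega>. \<Sum>i\<in>UNIV. \<Sum>j\<in>UNIV. \<Sum>k\<in>UNIV. (L$i$j * L$i$k) * (eps \<omega> $ j * eps \<omega> $ k))"
    using i1 i2 by (simp add: Bochner_Integration.integral_add prob_space)
  also have "\<dots> = (norm a)\<^sup>2 + sigma\<^sup>2 * (\<Sum>i\<in>UNIV. \<Sum>j\<in>UNIV. (L$i$j)\<^sup>2)"
    unfolding e1 e2 by (simp add: norm_sq_vec)
  finally show ?thesis .
qed



lemma penrose_unique:
  fixes A :: "real^'n::finite^'m::finite" and B C :: "real^'m^'n"
  assumes b1: "A ** B ** A = A" and b2: "B ** A ** B = B"
    and b3: "transpose (A ** B) = A ** B" and b4: "transpose (B ** A) = B ** A"
    and c1: "A ** C ** A = A" and c2: "C ** A ** C = C"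
    and c3: "transpose (A ** C) = A ** C" and c4: "transpose (C ** A) = C ** A"
  shows "B = C"
proof -
  have tA: "transpose A = transpose A ** transpose C ** transpose A"
    using c1 by (metis matrix_transpose_mul matrix_mul_assoc)
  have tA2: "transpose A = transpose A ** transpose B ** transpose A"
    using b1 by (metis matrix_transpose_mul matrix_mul_assoc)
  have "B = B ** (A ** B)" using b2 by (simp add: matrix_mul_assoc)
  also have "\<dots> = B ** (transpose B ** transpose A)" using b3 by (metis matrix_transpose_mul)
  also have "\<dots> = B ** transpose B ** (transpose A ** transpose C ** transpose A)"
    using tA by (simp add: matrix_mul_assoc)
  also have "\<dots> = B ** (transpose B ** transpose A) ** (transpose C ** transpose A)"
    by (simp add: matrix_mul_assoc)
  also have "\<dots> = B ** (A ** B) ** (A ** C)"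
    using b3 c3 by (simp add: matrix_transpose_mul)
  also have "\<dots> = (B ** A ** B) ** A ** C" by (simp add: matrix_mul_assoc)
  also have "\<dots> = B ** A ** C" using b2 by simp
  finally have eB: "B = B ** A ** C" .
  have "C = (C ** A) ** C" using c2 by simp
  also have "\<dots> = (transpose A ** transpose C) ** C" using c4 by (metis matrix_transpose_mul)
  also have "\<dots> = (transpose A ** transpose B ** transpose A) ** transpose C ** C"
    using tA2 by (simp add: matrix_mul_assoc)
  also have "\<dots> = (transpose A ** transpose B) ** (transpose A ** transpose C) ** C"
    by (simp add: matrix_mul_assoc)
  also have "\<dots> = (B ** A) ** (C ** A) ** C"
    using b4 c4 by (simp add: matrix_transpose_mul)
  also have "\<dots> = B ** A ** (C ** A ** C)" by (simp add: matrix_mul_assoc)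
  also have "\<dots> = B ** A ** C" using c2 by simp
  finally have eC: "C = B ** A ** C" .
  show ?thesis using eB eC by simp
qed

lemma pinv_eq:
  fixes A :: "real^'n::finite^'m::finite" and B :: "real^'m^'n"
  assumes "A ** B ** A = A" "B ** A ** B = B"
    "transpose (A ** B) = A ** B" "transpose (B ** A) = B ** A"
  shows "pinv A = B"
  unfolding pinv_def
  by (rule the_equality) (use assms penrose_unique in blast)+

lemma matrix_inv_eq:
  fixes A B :: "real^'n::finite^'n"
  assumes "A ** B = mat 1" "B ** A = mat 1"
  shows "matrix_inv A = B"
  unfolding matrix_inv_def
proof (rule someI2[of _ B])
  show "A ** B = mat 1 \<and> B ** A = mat 1" using assms by simp
next
  fix C assume "A ** C = mat 1 \<and> C ** A = mat 1"
  hence "C = C ** (A ** B)" "C ** A = mat 1" using assms by auto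
  hence "C = (C ** A) ** B" by (simp add: matrix_mul_assoc)
  thus "C = B" using \<open>C ** A = mat 1\<close> by simp
qed

lemma pinv_ud: assumes U: "orthogonal_matrix U"
  shows "pinv (ud U d) = ud U (\<lambda>i. inverse (d i))"
proof (rule pinv_eq)
  have k: "d i * inverse (d i) * d i = d i" for i by (cases "d i = 0") auto
  have k2: "inverse (d i) * d i * inverse (d i) = inverse (d i)" for i by (cases "d i = 0") auto
  show "ud U d ** ud U (\<lambda>i. inverse (d i)) ** ud U d = ud U d"
    by (simp only: ud_mul[OF U] k)
  show "ud U (\<lambda>i. inverse (d i)) ** ud U d ** ud U (\<lambda>i. inverse (d i)) = ud U (\<lambda>i. inverse (d i))"
    by (simp only: ud_mul[OF U] k2)
  show "transpose (ud U d ** ud U (\<lambda>i. inverse (d i))) = ud U d ** ud U (\<lambda>i. inverse (d i))"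
    by (simp add: ud_mul[OF U] ud_transpose)
  show "transpose (ud U (\<lambda>i. inverse (d i)) ** ud U d) = ud U (\<lambda>i. inverse (d i)) ** ud U d"
    by (simp add: ud_mul[OF U] ud_transpose)
qed

lemma matrix_inv_ud: assumes U: "orthogonal_matrix U" and nz: "\<And>i. d i \<noteq> 0"
  shows "matrix_inv (ud U d) = ud U (\<lambda>i. inverse (d i))"
  by (rule matrix_inv_eq) (simp_all add: ud_mul[OF U] nz ud_one[OF U])

lemma Sig_sym: "transpose (Sig X) = Sig X"
  by (simp add: Sig_def transpose_scalar matrix_transpose_mul)

lemma Sig_psd: "x \<bullet> (Sig X *v x) \<ge> 0"
proof -
  have "x \<bullet> ((transpose X ** X) *v x) = (X *v x) \<bullet> (X *v x)"
  proof -
    have "x \<bullet> ((transpose X ** X) *v x) = x \<bullet> (transpose X *v (X *v x))"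
      by (simp add: matrix_vector_mul_assoc)
    also have "\<dots> = x \<bullet> ((X *v x) v* X)" by (simp add: transpose_matrix_vector)
    also have "\<dots> = (X *v x) \<bullet> (X *v x)"
      by (metis dot_lmul_matrix inner_commute)
    finally show ?thesis .
  qed
  thus ?thesis by (simp add: Sig_def scaleR_matrix_vector_assoc[symmetric])
qed

lemma ud_eigen: assumes U: "orthogonal_matrix U"
  shows "ud U d *v (U *v axis i 1) = d i *\<^sub>R (U *v axis i 1)"
proof -
  have "ud U d *v (U *v axis i 1) = U *v (diag_mat d *v ((transpose U ** U) *v axis i 1))"
    unfolding ud_def by (simp add: matrix_vector_mul_assoc matrix_mul_assoc)
  also have "diag_mat d *v ((transpose U ** U) *v axis i 1) = d i *\<^sub>R axis i 1"
  proof -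
    have "(transpose U ** U) *v axis i 1 = axis i 1" using orth_TU[OF U] by simp
    thus ?thesis by (simp add: diag_mat_vec vec_eq_iff axis_def)
  qed
  finally show ?thesis by (simp add: matrix_vector_mult_scaleR)
qed

lemma Sig_spec: obtains U :: "real^'p::finite^'p" and mu where "orthogonal_matrix U"
  "Sig (X :: real^'p^'n::finite) = ud U mu" "\<And>i. mu i \<ge> 0"
proof -
  obtain U mu where U: "orthogonal_matrix U" and S: "Sig X = ud U mu"
    using spectral[OF Sig_sym] by blast
  have "mu i \<ge> 0" for i
  proof -
    define x where "x = U *v axis i 1"
    have nx: "norm x = 1" using orth_norm[OF U] by (simp add: x_def)
    have "x \<bullet> (Sig X *v x) = mu i * (x \<bullet> x)"
      unfolding S x_def ud_eigen[OF U] by simp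
    also have "x \<bullet> x = 1" using nx by (simp add: dot_square_norm)
    finally show ?thesis using Sig_psd[of x X] by simp
  qed
  thus ?thesis using that U S by blast
qed



lemma co_ud: assumes U: "orthogonal_matrix U"
  shows "(transpose U *v (ud U k *v x)) $ i = k i * (transpose U *v x) $ i"
  using ud_vec[OF U] by (simp add: diag_mat_vec)

lemma inner_co: fixes U :: "real^'n::finite^'n" assumes U: "orthogonal_matrix U"
  shows "x \<bullet> y = (\<Sum>i\<in>UNIV. (transpose U *v x) $ i * (transpose U *v y) $ i)"
proof -
  have "(transpose U *v x) \<bullet> (transpose U *v y) = x \<bullet> (transpose (transpose U) *v (transpose U *v y))"
    by (metis dot_lmul_matrix transpose_matrix_vector transpose_transpose)
  also have "transpose (transpose U) *v (transpose U *v y) = (U ** transpose U) *v y"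
    by (simp only: transpose_transpose matrix_vector_mul_assoc)
  also have "\<dots> = y" using orth_UT[OF U] by simp
  finally show ?thesis by (simp add: inner_vec_def)
qed

lemma frob_ud: fixes U :: "real^'n::finite^'n" and Y :: "real^'m::finite^'n"
  assumes U: "orthogonal_matrix U"
  shows "(\<Sum>i\<in>UNIV. \<Sum>j\<in>UNIV. ((ud U k ** Y)$i$j)\<^sup>2)
       = (\<Sum>i\<in>UNIV. (k i)\<^sup>2 * (\<Sum>j\<in>UNIV. ((transpose U *v (Y *v axis j 1))$i)\<^sup>2))"
proof -
  have col: "(N *v axis j 1) $ i = N $ i $ j" for N :: "real^'m^'n" and i j
    by (simp add: matrix_vector_mult_def axis_def delta_right)
  have "(\<Sum>i\<in>UNIV. \<Sum>j\<in>UNIV. ((ud U k ** Y)$i$j)\<^sup>2) = (\<Sum>j\<in>UNIV. \<Sum>i\<in>UNIV. ((ud U k ** Y)$i$j)\<^sup>2)"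
    by (rule sum.swap)
  also have "\<dots> = (\<Sum>j\<in>UNIV. (norm (ud U k *v (Y *v axis j 1)))\<^sup>2)"
    by (simp add: norm_sq_vec col[symmetric] matrix_vector_mul_assoc)
  also have "\<dots> = (\<Sum>j\<in>UNIV. \<Sum>i\<in>UNIV. (k i * (transpose U *v (Y *v axis j 1))$i)\<^sup>2)"
    by (simp add: norm_ud_vec[OF U])
  also have "\<dots> = (\<Sum>i\<in>UNIV. \<Sum>j\<in>UNIV. (k i)\<^sup>2 * ((transpose U *v (Y *v axis j 1))$i)\<^sup>2)"
    by (subst sum.swap) (simp add: power_mult_distrib)
  also have "\<dots> = (\<Sum>i\<in>UNIV. (k i)\<^sup>2 * (\<Sum>j\<in>UNIV. ((transpose U *v (Y *v axis j 1))$i)\<^sup>2))"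
    by (simp add: sum_distrib_left)
  finally show ?thesis .
qed

lemma risk_formula:
  fixes M :: "'a measure" and eps :: "'a \<Rightarrow> real^'n::finite"
    and U :: "real^'p::finite^'p" and Y :: "real^'n^'p" and sigma :: real
  assumes U: "orthogonal_matrix U" and P: "prob_space M"
    and eps_int: "\<And>i. integrable M (\<lambda>\<omega>. eps \<omega> $ i)"
    and eps_int2: "\<And>i j. integrable M (\<lambda>\<omega>. eps \<omega> $ i * eps \<omega> $ j)"
    and eps_mean: "\<And>i. prob_space.expectation M (\<lambda>\<omega>. eps \<omega> $ i) = 0"
    and eps_cov: "\<And>i j. prob_space.expectation M (\<lambda>\<omega>. eps \<omega> $ i * eps \<omega> $ j)
                     = (if i = j then sigma\<^sup>2 else 0)"
  shows "prob_space.expectation M (\<lambda>\<omega>. (norm (ud U k *v (ud U m *v (w + Y *v eps \<omega>) - \<gamma>)))\<^sup>2)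
     = (\<Sum>i\<in>UNIV. (k i * (m i * (transpose U *v w) $ i - (transpose U *v \<gamma>) $ i))\<^sup>2)
       + sigma\<^sup>2 * (\<Sum>i\<in>UNIV. (k i * m i)\<^sup>2 * (\<Sum>j\<in>UNIV. ((transpose U *v (Y *v axis j 1))$i)\<^sup>2))"
proof -
  define a where "a = ud U k *v (ud U m *v w - \<gamma>)"
  define L where "L = ud U (\<lambda>i. k i * m i) ** Y"
  have eq: "ud U k *v (ud U m *v (w + Y *v e) - \<gamma>) = a + L *v e" for e
  proof -
    have "ud U k *v (ud U m *v (w + Y *v e) - \<gamma>) = ud U k *v (ud U m *v w - \<gamma>) + (ud U k ** ud U m ** Y) *v e"
      by (simp add: matrix_vector_right_distrib matrix_vector_mult_diff_distrib matrix_vector_mul_assoc[symmetric] algebra_simps)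
    thus ?thesis by (simp add: a_def L_def ud_mul[OF U])
  qed
  have "prob_space.expectation M (\<lambda>\<omega>. (norm (ud U k *v (ud U m *v (w + Y *v eps \<omega>) - \<gamma>)))\<^sup>2)
      = prob_space.expectation M (\<lambda>\<omega>. (norm (a + L *v eps \<omega>))\<^sup>2)" by (simp only: eq)
  also have "\<dots> = (norm a)\<^sup>2 + sigma\<^sup>2 * (\<Sum>i\<in>UNIV. \<Sum>j\<in>UNIV. (L$i$j)\<^sup>2)"
    by (rule exp_quad[OF P eps_int eps_int2 eps_mean eps_cov])
  also have "(norm a)\<^sup>2 = (\<Sum>i\<in>UNIV. (k i * (m i * (transpose U *v w) $ i - (transpose U *v \<gamma>) $ i))\<^sup>2)"
    unfolding a_def norm_ud_vec[OF U]
    by (simp add: matrix_vector_mult_diff_distrib co_ud[OF U] del: transpose_matrix_vector)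
  also have "(\<Sum>i\<in>UNIV. \<Sum>j\<in>UNIV. (L$i$j)\<^sup>2) = (\<Sum>i\<in>UNIV. (k i * m i)\<^sup>2 * (\<Sum>j\<in>UNIV. ((transpose U *v (Y *v axis j 1))$i)\<^sup>2))"
    unfolding L_def by (rule frob_ud[OF U])
  finally show ?thesis .
qed



lemma coord_bias:
  fixes mu lam t bb g :: real
  assumes mu: "mu \<ge> 0" and lam: "lam \<ge> 0" and t: "t > 0"
  shows "(sqrt (mu + lam) * (inverse (mu + lam) * (1 - exp (- t * (mu + lam))) * (mu * bb) - g))\<^sup>2
    \<le> (sqrt (mu + lam) * (inverse (mu + lam + 1/t) * (mu * bb) - g))\<^sup>2
       - 2 * ((mu + lam) * (inverse (1 + t * (mu + lam)) - exp (- t * (mu + lam)))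
              * (inverse (mu + lam) * (mu * bb)) * (g - inverse (mu + lam) * (mu * bb)))"
proof (cases "mu + lam = 0")
  case True
  hence "mu = 0" using mu lam by simp
  thus ?thesis using True by simp
next
  case False
  define s where "s = mu + lam"
  have s: "s > 0" using False mu lam by (simp add: s_def)
  define e where "e = exp (- t * s)"
  define rho where "rho = inverse (1 + t * s)"
  define bl where "bl = inverse s * (mu * bb)"
  have ts: "1 + t * s > 0" using s t by (smt (verit) mult_pos_pos)
  have r: "inverse (s + 1/t) = (1 - rho) * inverse s"
    unfolding rho_def using s t ts by (simp add: field_simps)
  have e0: "0 \<le> e" by (simp add: e_def)
  have erho: "e \<le> rho"
  proof -
    have "1 + t * s \<le> exp (t * s)" by (rule exp_ge_add_one_self)
    hence "inverse (exp (t * s)) \<le> inverse (1 + t * s)" using ts by (rule le_imp_inverse_le)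
    thus ?thesis by (simp add: e_def rho_def exp_minus)
  qed
  have sq: "(sqrt s * x)\<^sup>2 = s * x\<^sup>2" for x using s by (simp add: power_mult_distrib)
  have h1: "inverse s * (1 - e) * (mu * bb) = (1 - e) * bl" by (simp add: bl_def)
  have h2: "inverse (s + 1/t) * (mu * bb) = (1 - rho) * bl" by (simp add: r bl_def)
  have "s * ((1 - rho) * bl - g)\<^sup>2 - 2 * (s * (rho - e) * bl * (g - bl)) - s * ((1 - e) * bl - g)\<^sup>2
      = s * (rho\<^sup>2 - e\<^sup>2) * bl\<^sup>2"
    by (simp add: algebra_simps power2_eq_square)
  moreover have "s * (rho\<^sup>2 - e\<^sup>2) * bl\<^sup>2 \<ge> 0"
    using s e0 erho by (intro mult_nonneg_nonneg) (auto intro: power_mono)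
  ultimately have "s * ((1 - e) * bl - g)\<^sup>2 \<le> s * ((1 - rho) * bl - g)\<^sup>2 - 2 * (s * (rho - e) * bl * (g - bl))"
    by linarith
  thus ?thesis
    unfolding s_def[symmetric] e_def[symmetric] rho_def[symmetric] bl_def[symmetric]
    unfolding sq h1 add.assoc[symmetric] h2 by simp
qed

lemma coord_var:
  fixes mu lam t :: real
  assumes mu: "mu \<ge> 0" and lam: "lam \<ge> 0" and t: "t > 0"
  shows "(sqrt (mu + lam) * (inverse (mu + lam) * (1 - exp (- t * (mu + lam)))))\<^sup>2
    \<le> 1.2985\<^sup>2 * (sqrt (mu + lam) * inverse (mu + lam + 1/t))\<^sup>2"
proof (cases "mu + lam = 0")
  case True
  thus ?thesis by simp
next
  case False
  define s where "s = mu + lam"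
  have s: "s > 0" using False mu lam by (simp add: s_def)
  define e where "e = exp (- t * s)"
  have ts: "1 + t * s > 0" using s t by (smt (verit) mult_pos_pos)
  have main: "(1 - exp (- (t * s))) * (1 + t * s) \<le> 12985/10000 * (t * s)"
    by (rule scalar_main) (use s t in simp)
  have tsp: "t * s > 0" using s t by simp
  have "e \<le> 1" using tsp by (simp add: e_def)
  hence h0: "0 \<le> inverse s * (1 - e)" using s by simp
  have hr: "inverse s * (1 - e) \<le> 1.2985 * inverse (s + 1/t)"
  proof -
    have "inverse (s + 1/t) = t / (1 + t * s)" using t s by (simp add: field_simps)
    moreover have "inverse s * (1 - e) \<le> 1.2985 * (t / (1 + t * s))"
      using main s t ts by (simp add: e_def field_simps)
    ultimately show ?thesis by simp
  qed
  have P: "(inverse s * (1 - e))\<^sup>2 \<le> (1.2985 * inverse (s + 1/t))\<^sup>2"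
    using hr h0 by (rule power_mono)
  have A: "(1.2985 * inverse (s + 1/t))\<^sup>2 = (1.2985::real)\<^sup>2 * (inverse (s + 1/t))\<^sup>2"
    by (rule power_mult_distrib)
  have "s * (inverse s * (1 - e))\<^sup>2 \<le> s * ((1.2985::real)\<^sup>2 * (inverse (s + 1/t))\<^sup>2)"
    using P s unfolding A by (intro mult_left_mono) auto
  hence B: "s * (inverse s * (1 - e))\<^sup>2 \<le> (1.2985::real)\<^sup>2 * (s * (inverse (s + 1/t))\<^sup>2)"
    by (simp only: mult.left_commute)
  have sq: "(sqrt s * x)\<^sup>2 = s * x\<^sup>2" for x using s by (simp add: power_mult_distrib)
  show ?thesis
    unfolding s_def[symmetric] e_def[symmetric] sq by (rule B)
qed

lemma coord_cond:
  fixes mu lam lam' t bb :: real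
  assumes mu: "mu \<ge> 0" and lam: "lam \<ge> 0" and t: "t > 0" and l': "0 \<le> lam'" "lam' \<le> lam"
  shows "0 \<le> (mu + lam) * (inverse (1 + t * (mu + lam)) - exp (- t * (mu + lam)))
              * (inverse (mu + lam) * (mu * bb)) * (inverse (mu + lam') * (mu * bb) - inverse (mu + lam) * (mu * bb))"
proof (cases "mu = 0")
  case True thus ?thesis by simp
next
  case False
  hence m: "mu > 0" using mu by simp
  define s where "s = mu + lam"
  have s: "s > 0" using m lam by (simp add: s_def)
  have ts: "1 + t * s > 0" using s t by (smt (verit) mult_pos_pos)
  have erho: "exp (- t * s) \<le> inverse (1 + t * s)"
  proof -
    have "1 + t * s \<le> exp (t * s)" by (rule exp_ge_add_one_self)
    hence "inverse (exp (t * s)) \<le> inverse (1 + t * s)" using ts by (rule le_imp_inverse_le)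
    thus ?thesis by (simp add: exp_minus)
  qed
  have inv: "inverse (mu + lam) \<le> inverse (mu + lam')"
    using m l' by (intro le_imp_inverse_le) auto
  have "(inverse (mu + lam) * (mu * bb)) * (inverse (mu + lam') * (mu * bb) - inverse (mu + lam) * (mu * bb))
      = inverse (mu + lam) * (inverse (mu + lam') - inverse (mu + lam)) * (mu * bb)\<^sup>2"
    by (simp add: algebra_simps power2_eq_square)
  also have "\<dots> \<ge> 0" using inv s by (simp add: s_def)
  finally have "0 \<le> (inverse (mu + lam) * (mu * bb)) * (inverse (mu + lam') * (mu * bb) - inverse (mu + lam) * (mu * bb))" .
  moreover have "0 \<le> (mu + lam) * (inverse (1 + t * (mu + lam)) - exp (- t * (mu + lam)))"
    using s erho by (simp add: s_def)
  ultimately have "0 \<le> ((mu + lam) * (inverse (1 + t * (mu + lam)) - exp (- t * (mu + lam))))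
     * ((inverse (mu + lam) * (mu * bb)) * (inverse (mu + lam') * (mu * bb) - inverse (mu + lam) * (mu * bb)))"
    by (metis mult_nonneg_nonneg)
  thus ?thesis by (simp only: mult.assoc)
qed



theorem proposition3p2:
  fixes M :: "'a measure"
    and X :: "real^'p::finite^'n::finite"
    and beta0 :: "real^'p"
    and eps :: "'a \<Rightarrow> real^'n"
    and sigma lam t :: real
  assumes "prob_space M"
    and eps_int: "\<And>i. integrable M (\<lambda>\<omega>. eps \<omega> $ i)"
    and eps_int2: "\<And>i j. integrable M (\<lambda>\<omega>. eps \<omega> $ i * eps \<omega> $ j)"
    and eps_mean: "\<And>i. prob_space.expectation M (\<lambda>\<omega>. eps \<omega> $ i) = 0"
    and eps_cov: "\<And>i j. prob_space.expectation M (\<lambda>\<omega>. eps \<omega> $ i * eps \<omega> $ j)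
                     = (if i = j then sigma\<^sup>2 else 0)"
    and beta0_row: "beta0 = (pinv X ** X) *v beta0"
    and lam: "lam \<ge> 0"
    and t: "t > 0"
  shows
   "(\<forall>\<gamma>::real^'p.
      inner ((Sig_lam X lam ** (matrix_inv (mat 1 + t *\<^sub>R Sig_lam X lam)
                                 - mat_exp ((- t) *\<^sub>R Sig_lam X lam))) *v beta_lam X beta0 lam)
            (\<gamma> - beta_lam X beta0 lam) \<ge> 0
      \<longrightarrow>
      prob_space.expectation M (\<lambda>\<omega>.
         (norm (mat_sqrt (Sig_lam X lam) *v (gf X lam t (X *v beta0 + eps \<omega>) - \<gamma>)))\<^sup>2)
      \<le> 1.2985\<^sup>2 * prob_space.expectation M (\<lambda>\<omega>.
         (norm (mat_sqrt (Sig_lam X lam) *v (ridge X (lam + 1 / t) (X *v beta0 + eps \<omega>) - \<gamma>)))\<^sup>2))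
    \<and>
    (\<forall>lam'\<in>{0..lam}.
      inner ((Sig_lam X lam ** (matrix_inv (mat 1 + t *\<^sub>R Sig_lam X lam)
                                 - mat_exp ((- t) *\<^sub>R Sig_lam X lam))) *v beta_lam X beta0 lam)
            (beta_lam X beta0 lam' - beta_lam X beta0 lam) \<ge> 0
      \<and>
      prob_space.expectation M (\<lambda>\<omega>.
         (norm (mat_sqrt (Sig_lam X lam) *v (gf X lam t (X *v beta0 + eps \<omega>) - beta_lam X beta0 lam')))\<^sup>2)
      \<le> 1.2985\<^sup>2 * prob_space.expectation M (\<lambda>\<omega>.
         (norm (mat_sqrt (Sig_lam X lam) *v (ridge X (lam + 1 / t) (X *v beta0 + eps \<omega>) - beta_lam X beta0 lam')))\<^sup>2))"
proof -
  note P = \<open>prob_space M\<close>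
  obtain U :: "real^'p^'p" and mu where U: "orthogonal_matrix U" and SU: "Sig X = ud U mu"
    and mu0: "\<And>i. mu i \<ge> 0" by (rule Sig_spec[where X = X]) blast
  define s where "s i = mu i + lam" for i
  have s0: "s i \<ge> 0" for i using mu0[of i] lam by (simp add: s_def)
  define n :: real where "n = real CARD('n)"
  define co where "co x = transpose U *v x" for x :: "real^'p"
  have F1: "Sig_lam X l = ud U (\<lambda>i. mu i + l)" for l
    unfolding Sig_lam_def SU ud_const[OF U, symmetric] ud_add ..
  have F2: "Sig_lam_inv X l = ud U (\<lambda>i. inverse (mu i + l))" if l0: "l \<ge> 0" for l
  proof (cases "l = 0")
    case True
    thus ?thesis by (simp add: Sig_lam_inv_def SU pinv_ud[OF U])
  next
    case False
    hence "l > 0" using l0 by simp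
    hence nz: "mu i + l \<noteq> 0" for i using mu0[of i] by simp
    show ?thesis using False by (simp add: Sig_lam_inv_def F1 matrix_inv_ud[OF U] nz)
  qed
  have F3: "Sig_lam_inv_half X lam = ud U (\<lambda>i. sqrt (inverse (s i)))"
    unfolding Sig_lam_inv_half_def mat_sqrt_def F2[OF lam] mat_fun_ud[OF U] s_def ..
  have F4: "mat_exp ((- t) *\<^sub>R Sig_lam X lam) = ud U (\<lambda>i. exp (- t * s i))"
    unfolding mat_exp_def F1 ud_scale mat_fun_ud[OF U] s_def ..
  have F5: "matrix_inv (mat 1 + t *\<^sub>R Sig_lam X lam) = ud U (\<lambda>i. inverse (1 + t * s i))"
  proof -
    have "mat 1 + t *\<^sub>R Sig_lam X lam = ud U (\<lambda>i. 1 + t * s i)"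
      unfolding F1 ud_scale ud_one[OF U, symmetric] ud_add s_def ..
    moreover have "1 + t * s i \<noteq> 0" for i
    proof -
      have "t * s i \<ge> 0" using t s0[of i] by simp
      thus ?thesis by simp
    qed
    ultimately show ?thesis by (simp add: matrix_inv_ud[OF U])
  qed
  have F6: "mat_sqrt (Sig_lam X lam) = ud U (\<lambda>i. sqrt (s i))"
    unfolding mat_sqrt_def F1 mat_fun_ud[OF U] s_def ..
  define Y :: "real^'n^'p" where "Y = (1/n) *\<^sub>R transpose X"
  define w where "w = Sig X *v beta0"
  have zy: "(1/n) *\<^sub>R (transpose X *v (X *v beta0 + e)) = w + Y *v e" for e
  proof -
    have "(1/n) *\<^sub>R (transpose X *v (X *v beta0)) = Sig X *v beta0"
      by (simp add: Sig_def n_def scaleR_matrix_vector_assoc matrix_vector_mul_assoc)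
    moreover have "(1/n) *\<^sub>R (transpose X *v e) = Y *v e"
      by (simp add: Y_def scaleR_matrix_vector_assoc del: transpose_matrix_vector)
    ultimately show ?thesis
      by (simp add: matrix_vector_right_distrib scaleR_add_right w_def)
  qed
  define h where "h i = inverse (s i) * (1 - exp (- t * s i))" for i
  have G1: "gf X lam t y = ud U h *v ((1/n) *\<^sub>R (transpose X *v y))" for y
  proof -
    have hh: "sqrt (inverse (s i)) * (1 - exp (- t * s i)) * sqrt (inverse (s i)) = h i" for i
    proof -
      have "sqrt (inverse (s i)) * sqrt (inverse (s i)) = inverse (s i)"
        using s0[of i] by simp
      thus ?thesis unfolding h_def by (metis mult.commute mult.left_commute)
    qed
    have "gf X lam t y = (ud U (\<lambda>i. sqrt (inverse (s i))) ** (ud U (\<lambda>i. 1) - ud U (\<lambda>i. exp (- t * s i))))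
        *v ((1/n) *\<^sub>R (ud U (\<lambda>i. sqrt (inverse (s i))) *v (transpose X *v y)))"
      unfolding gf_def y_lam_def F3 F4 ud_one[OF U] n_def ..
    also have "\<dots> = (1/n) *\<^sub>R ((ud U (\<lambda>i. sqrt (inverse (s i))) ** (ud U (\<lambda>i. 1) - ud U (\<lambda>i. exp (- t * s i)))
        ** ud U (\<lambda>i. sqrt (inverse (s i)))) *v (transpose X *v y))"
      by (simp add: matrix_vector_mult_scaleR matrix_vector_mul_assoc)
    also have "ud U (\<lambda>i. sqrt (inverse (s i))) ** (ud U (\<lambda>i. 1) - ud U (\<lambda>i. exp (- t * s i)))
        ** ud U (\<lambda>i. sqrt (inverse (s i))) = ud U h"
      unfolding ud_diff ud_mul[OF U] hh ..
    finally show ?thesis by (simp add: matrix_vector_mult_scaleR)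
  qed
  define r where "r i = inverse (s i + 1/t)" for i
  have G2: "ridge X (lam + 1/t) y = ud U r *v ((1/n) *\<^sub>R (transpose X *v y))" for y
  proof -
    have l1: "lam + 1/t \<ge> 0" using lam t by simp
    show ?thesis unfolding ridge_def F2[OF l1] r_def s_def n_def by (simp add: add.assoc)
  qed
  define Wt where "Wt i = (\<Sum>j\<in>UNIV. ((transpose U *v (Y *v axis j 1))$i)\<^sup>2)" for i
  have Wt0: "Wt i \<ge> 0" for i unfolding Wt_def by (simp add: sum_nonneg)
  have RG: "prob_space.expectation M (\<lambda>\<omega>.
         (norm (mat_sqrt (Sig_lam X lam) *v (gf X lam t (X *v beta0 + eps \<omega>) - \<gamma>)))\<^sup>2)
     = (\<Sum>i\<in>UNIV. (sqrt (s i) * (h i * co w $ i - co \<gamma> $ i))\<^sup>2)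
       + sigma\<^sup>2 * (\<Sum>i\<in>UNIV. (sqrt (s i) * h i)\<^sup>2 * Wt i)" for \<gamma>
    unfolding F6 G1 zy co_def Wt_def
    by (rule risk_formula[OF U P eps_int eps_int2 eps_mean eps_cov])
  have RR: "prob_space.expectation M (\<lambda>\<omega>.
         (norm (mat_sqrt (Sig_lam X lam) *v (ridge X (lam + 1 / t) (X *v beta0 + eps \<omega>) - \<gamma>)))\<^sup>2)
     = (\<Sum>i\<in>UNIV. (sqrt (s i) * (r i * co w $ i - co \<gamma> $ i))\<^sup>2)
       + sigma\<^sup>2 * (\<Sum>i\<in>UNIV. (sqrt (s i) * r i)\<^sup>2 * Wt i)" for \<gamma>
    unfolding F6 G2 zy co_def Wt_def
    by (rule risk_formula[OF U P eps_int eps_int2 eps_mean eps_cov])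
  define bb where "bb i = co beta0 $ i" for i
  have cw: "co w $ i = mu i * bb i" for i
    unfolding w_def SU co_def bb_def co_ud[OF U] ..
  have cbl: "co (beta_lam X beta0 l) $ i = inverse (mu i + l) * (mu i * bb i)" if "l \<ge> 0" for l i
    unfolding beta_lam_def F2[OF that] SU co_def bb_def matrix_vector_mul_assoc[symmetric] co_ud[OF U] ..
  have Emat: "Sig_lam X lam ** (matrix_inv (mat 1 + t *\<^sub>R Sig_lam X lam) - mat_exp ((- t) *\<^sub>R Sig_lam X lam))
      = ud U (\<lambda>i. s i * (inverse (1 + t * s i) - exp (- t * s i)))"
    unfolding F5 F4 by (simp only: ud_diff F1 ud_mul[OF U] s_def)
  have cond: "inner ((Sig_lam X lam ** (matrix_inv (mat 1 + t *\<^sub>R Sig_lam X lam)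
                                 - mat_exp ((- t) *\<^sub>R Sig_lam X lam))) *v beta_lam X beta0 lam) (\<gamma> - beta_lam X beta0 lam)
     = (\<Sum>i\<in>UNIV. s i * (inverse (1 + t * s i) - exp (- t * s i)) * (inverse (s i) * (mu i * bb i))
          * (co \<gamma> $ i - inverse (s i) * (mu i * bb i)))" for \<gamma>
    unfolding Emat inner_co[OF U] co_def[symmetric]
    by (simp add: co_def co_ud[OF U] matrix_vector_mult_diff_distrib cbl[OF lam, unfolded co_def] s_def
        del: transpose_matrix_vector)
  have part1: "prob_space.expectation M (\<lambda>\<omega>.
         (norm (mat_sqrt (Sig_lam X lam) *v (gf X lam t (X *v beta0 + eps \<omega>) - \<gamma>)))\<^sup>2)
      \<le> 1.2985\<^sup>2 * prob_space.expectation M (\<lambda>\<omega>.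
         (norm (mat_sqrt (Sig_lam X lam) *v (ridge X (lam + 1 / t) (X *v beta0 + eps \<omega>) - \<gamma>)))\<^sup>2)"
    if c: "inner ((Sig_lam X lam ** (matrix_inv (mat 1 + t *\<^sub>R Sig_lam X lam)
                                 - mat_exp ((- t) *\<^sub>R Sig_lam X lam))) *v beta_lam X beta0 lam)
            (\<gamma> - beta_lam X beta0 lam) \<ge> 0" for \<gamma>
  proof -
    define C where "C i = s i * (inverse (1 + t * s i) - exp (- t * s i)) * (inverse (s i) * (mu i * bb i))
          * (co \<gamma> $ i - inverse (s i) * (mu i * bb i))" for i
    have C0: "(\<Sum>i\<in>UNIV. C i) \<ge> 0" using c unfolding cond C_def .
    define Bg where "Bg = (\<Sum>i\<in>UNIV. (sqrt (s i) * (h i * co w $ i - co \<gamma> $ i))\<^sup>2)"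
    define Br where "Br = (\<Sum>i\<in>UNIV. (sqrt (s i) * (r i * co w $ i - co \<gamma> $ i))\<^sup>2)"
    define Vg where "Vg = (\<Sum>i\<in>UNIV. (sqrt (s i) * h i)\<^sup>2 * Wt i)"
    define Vr where "Vr = (\<Sum>i\<in>UNIV. (sqrt (s i) * r i)\<^sup>2 * Wt i)"
    have bi: "(sqrt (s i) * (h i * co w $ i - co \<gamma> $ i))\<^sup>2 \<le> (sqrt (s i) * (r i * co w $ i - co \<gamma> $ i))\<^sup>2 - 2 * C i" for i
      unfolding C_def h_def r_def cw s_def using coord_bias[OF mu0[of i] lam t, of "bb i" "co \<gamma> $ i"] .
    have "Bg \<le> (\<Sum>i\<in>UNIV. (sqrt (s i) * (r i * co w $ i - co \<gamma> $ i))\<^sup>2 - 2 * C i)"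
      unfolding Bg_def by (rule sum_mono) (rule bi)
    also have "\<dots> = Br - 2 * (\<Sum>i\<in>UNIV. C i)"
      by (simp add: Br_def sum_subtractf sum_distrib_left)
    finally have Bgr: "Bg \<le> Br - 2 * (\<Sum>i\<in>UNIV. C i)" .
    have vi: "(sqrt (s i) * h i)\<^sup>2 * Wt i \<le> 1.2985\<^sup>2 * ((sqrt (s i) * r i)\<^sup>2 * Wt i)" for i
    proof -
      have "(sqrt (s i) * h i)\<^sup>2 \<le> 1.2985\<^sup>2 * (sqrt (s i) * r i)\<^sup>2"
        unfolding h_def r_def s_def using coord_var[OF mu0[of i] lam t] .
      hence "(sqrt (s i) * h i)\<^sup>2 * Wt i \<le> (1.2985\<^sup>2 * (sqrt (s i) * r i)\<^sup>2) * Wt i"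
        using Wt0[of i] by (rule mult_right_mono)
      thus ?thesis by (simp only: mult.assoc)
    qed
    have "Vg \<le> (\<Sum>i\<in>UNIV. 1.2985\<^sup>2 * ((sqrt (s i) * r i)\<^sup>2 * Wt i))"
      unfolding Vg_def by (rule sum_mono) (rule vi)
    hence Vgr: "Vg \<le> 1.2985\<^sup>2 * Vr" unfolding Vr_def by (simp add: sum_distrib_left)
    have Br0: "Br \<ge> 0" unfolding Br_def by (simp add: sum_nonneg)
    have sVg: "sigma\<^sup>2 * Vg \<le> sigma\<^sup>2 * (1.2985\<^sup>2 * Vr)"
      using Vgr by (rule mult_left_mono) simp
    have c1: "(1::real) \<le> 1.2985\<^sup>2" by (simp add: power2_eq_square)
    have cBr: "Br \<le> 1.2985\<^sup>2 * Br" using mult_right_mono[OF c1 Br0] by simp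
    have "Bg + sigma\<^sup>2 * Vg \<le> 1.2985\<^sup>2 * (Br + sigma\<^sup>2 * Vr)"
      using Bgr C0 sVg cBr by (simp add: algebra_simps)
    thus ?thesis unfolding RG RR Bg_def Br_def Vg_def Vr_def .
  qed
  have part2: "inner ((Sig_lam X lam ** (matrix_inv (mat 1 + t *\<^sub>R Sig_lam X lam)
                                 - mat_exp ((- t) *\<^sub>R Sig_lam X lam))) *v beta_lam X beta0 lam)
            (beta_lam X beta0 lam' - beta_lam X beta0 lam) \<ge> 0"
    if l': "lam' \<in> {0..lam}" for lam'
  proof -
    have l0: "0 \<le> lam'" "lam' \<le> lam" using l' by auto
    show ?thesis unfolding cond cbl[OF l0(1)]
      unfolding s_def by (rule sum_nonneg) (rule coord_cond[OF mu0 lam t l0])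
  qed
  show ?thesis using part1 part2 by blast
qed

end
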